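(* Let $M_1$ and $M_2$ be matroids on a common ground set $E$ with the same rank $r$, and assume $r_{M_1}(X)+r_{M_2}(E\setminus X)>r$ for every $\emptyset\ne X\subsetneq E$. Let $B$ be a common basis of $M_1,M_2$ and $\psi\colon E\to\Gamma$ a labeling to an abelian group $\Gamma$. Then every directed cycle $C$ of $D_{M_1,M_2}(B)$ satisfies $\psi'(C)=0$ if and only if there exist labelings $\psi_1,\psi_2\colon E\to\Gamma$ with $\psi=\psi_1+\psi_2$ such that, for $i=1,2$, $\psi_i$ is constant on each connected component of $M_i$.
   Context: $r_M$ denotes the rank function. For a common basis $B$, the digraph $D_{M_1,M_2}(B)$ has vertex set $E$ and arcs: for each $x\in B$, $y\in E\setminus B$ with $B-x+y$ a basis of $M_1$, an arc $xy$ with label $\psi'(xy):=\psi(y)$; for each $x\in B$, $y\in E\setminus B$ with $B-x+y$ a basis of $M_2$, an arc $yx$ with label $\psi'(yx):=-\psi(x)$. The label of a directed cycle is the sum of the labels of its arcs. Connected components of a matroid are the classes of the relation "equal or in a common circuit". *)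

theory Defs
  imports Main
begin

definition matroid :: "'a set \<Rightarrow> ('a set \<Rightarrow> bool) \<Rightarrow> bool" where
  "matroid E indep \<longleftrightarrow> finite E \<and> indep {} \<and>
     (\<forall>X. indep X \<longrightarrow> X \<subseteq> E) \<and>
     (\<forall>X Y. indep X \<and> Y \<subseteq> X \<longrightarrow> indep Y) \<and>
     (\<forall>X Y. indep X \<and> indep Y \<and> card X < card Y \<longrightarrow>
        (\<exists>y\<in>Y - X. indep (insert y X)))"

definition mrank :: "('a set \<Rightarrow> bool) \<Rightarrow> 'a set \<Rightarrow> nat" where
  "mrank indep X = Max {card Y | Y. Y \<subseteq> X \<and> indep Y}"

definition mbasis :: "'a set \<Rightarrow> ('a set \<Rightarrow> bool) \<Rightarrow> 'a set \<Rightarrow> bool" where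
  "mbasis E indep B \<longleftrightarrow> B \<subseteq> E \<and> indep B \<and> (\<forall>x\<in>E - B. \<not> indep (insert x B))"

definition mcircuit :: "'a set \<Rightarrow> ('a set \<Rightarrow> bool) \<Rightarrow> 'a set \<Rightarrow> bool" where
  "mcircuit E indep C \<longleftrightarrow> C \<subseteq> E \<and> \<not> indep C \<and> (\<forall>x\<in>C. indep (C - {x}))"

definition comp_rel :: "'a set \<Rightarrow> ('a set \<Rightarrow> bool) \<Rightarrow> 'a \<Rightarrow> 'a \<Rightarrow> bool" where
  "comp_rel E indep x y \<longleftrightarrow> x = y \<or> (\<exists>C. mcircuit E indep C \<and> x \<in> C \<and> y \<in> C)"

definition mcomponents :: "'a set \<Rightarrow> ('a set \<Rightarrow> bool) \<Rightarrow> 'a set set" where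
  "mcomponents E indep = {{y \<in> E. comp_rel E indep x y} | x. x \<in> E}"

definition exch_arcs :: "'a set \<Rightarrow> ('a set \<Rightarrow> bool) \<Rightarrow> ('a set \<Rightarrow> bool) \<Rightarrow> 'a set \<Rightarrow> ('a \<times> 'a) set" where
  "exch_arcs E I1 I2 B =
     {(x, y) | x y. x \<in> B \<and> y \<in> E - B \<and> mbasis E I1 (insert y (B - {x}))} \<union>
     {(y, x) | x y. x \<in> B \<and> y \<in> E - B \<and> mbasis E I2 (insert y (B - {x}))}"

text \<open>Label psi' of an arc: arcs leaving B (from M1) get psi of the head,
  arcs entering B (from M2) get minus psi of the head.\<close>
definition arc_label :: "'a set \<Rightarrow> ('a \<Rightarrow> 'g::ab_group_add) \<Rightarrow> 'a \<times> 'a \<Rightarrow> 'g" where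
  "arc_label B \<psi> a = (if fst a \<in> B then \<psi> (snd a) else - \<psi> (snd a))"

definition dir_cycle :: "('a \<times> 'a) set \<Rightarrow> 'a list \<Rightarrow> bool" where
  "dir_cycle A vs \<longleftrightarrow> vs \<noteq> [] \<and> distinct vs \<and>
     (\<forall>i < length vs. (vs ! i, vs ! ((i + 1) mod length vs)) \<in> A)"

definition cycle_label :: "'a set \<Rightarrow> ('a \<Rightarrow> 'g::ab_group_add) \<Rightarrow> 'a list \<Rightarrow> 'g" where
  "cycle_label B \<psi> vs =
     (\<Sum>i < length vs. arc_label B \<psi> (vs ! i, vs ! ((i + 1) mod length vs)))"

end

theory Submission
  imports Defs
begin


lemma m_fin: "matroid E I \<Longrightarrow> finite E" by (simp add: matroid_def)
lemma m_empty: "matroid E I \<Longrightarrow> I {}" by (simp add: matroid_def)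
lemma m_sub: "matroid E I \<Longrightarrow> I X \<Longrightarrow> X \<subseteq> E" by (simp add: matroid_def)
lemma m_mono: "matroid E I \<Longrightarrow> I X \<Longrightarrow> Y \<subseteq> X \<Longrightarrow> I Y" unfolding matroid_def by blast
lemma m_aug: "matroid E I \<Longrightarrow> I X \<Longrightarrow> I Y \<Longrightarrow> card X < card Y \<Longrightarrow> \<exists>y\<in>Y - X. I (insert y X)"
  unfolding matroid_def by blast
lemma m_finX: "matroid E I \<Longrightarrow> I X \<Longrightarrow> finite X"
  using finite_subset[OF m_sub m_fin] by blast

lemma m_ext:
  assumes m: "matroid E I" 
  shows "I X \<Longrightarrow> I Y \<Longrightarrow> card X \<le> card Y \<Longrightarrow> \<exists>Z. X \<subseteq> Z \<and> Z \<subseteq> X \<union> Y \<and> I Z \<and> card Z = card Y"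
proof (induction "card Y - card X" arbitrary: X)
  case 0
  then show ?case by auto
next
  case (Suc n)
  then have "card X < card Y" by simp
  then obtain y where y: "y \<in> Y - X" "I (insert y X)" using m_aug[OF m Suc(3,4)] by blast
  have fx: "finite X" using m_finX[OF m Suc(3)] .
  have c: "card (insert y X) = card X + 1" using y fx by simp
  have n: "n = card Y - card (insert y X)" using Suc(2) c by simp
  have le: "card (insert y X) \<le> card Y" using c \<open>card X < card Y\<close> by simp
  obtain Z where Z: "insert y X \<subseteq> Z" "Z \<subseteq> insert y X \<union> Y" "I Z" "card Z = card Y"
    using Suc(1)[OF n y(2) Suc(4) le] by blast
  have "X \<subseteq> Z" using Z(1) by blast
  moreover have "Z \<subseteq> X \<union> Y" using Z(2) y by blast
  ultimately show ?case using Z(3,4) by blast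
qed

lemma basis_card:
  assumes m: "matroid E I" and b: "mbasis E I B" and z: "I Z"
  shows "card Z \<le> card B"
proof (rule ccontr)
  assume "\<not> ?thesis"
  then obtain w where "w \<in> Z - B" "I (insert w B)" using m_aug[OF m _ z] b unfolding mbasis_def by force
  then show False using b m_sub[OF m z] unfolding mbasis_def by blast
qed

lemma basis_of_card:
  assumes m: "matroid E I" and b: "mbasis E I B" and z: "I Z" and c: "card Z = card B"
  shows "mbasis E I Z"
  unfolding mbasis_def
proof (intro conjI ballI)
  show "Z \<subseteq> E" using m_sub[OF m z] .
  show "I Z" by fact
  fix w assume w: "w \<in> E - Z"
  show "\<not> I (insert w Z)"
  proof
    assume "I (insert w Z)"
    moreover have "card (insert w Z) = card B + 1" using w c m_finX[OF m z] by simp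
    ultimately show False using basis_card[OF m b] by force
  qed
qed

lemma L1:
  assumes m: "matroid E I" and b: "mbasis E I B" and y: "y \<in> E - B" and D: "D \<subseteq> B"
    and ind: "I (insert y D)"
  shows "\<exists>x\<in>B - D. mbasis E I (insert y (B - {x}))"
proof -
  have bi: "I B" and bE: "B \<subseteq> E" using b unfolding mbasis_def by auto
  have fB: "finite B" using m_finX[OF m bi] .
  have "D \<noteq> B" using b y ind unfolding mbasis_def by blast
  then have "card D < card B" using D fB by (meson psubset_card_mono psubsetI)
  moreover have "y \<notin> D" using y D by blast
  ultimately have cle: "card (insert y D) \<le> card B" using finite_subset[OF D fB] by simp
  obtain Z where Z: "insert y D \<subseteq> Z" "Z \<subseteq> insert y D \<union> B" "I Z" "card Z = card B"
    using m_ext[OF m ind bi cle] by blast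
  have fZ: "finite Z" using m_finX[OF m Z(3)] .
  have "Z - {y} \<subseteq> B" using Z(2) D by blast
  moreover have "card Z > 0" using fZ Z(1) by (auto simp: card_gt_0_iff)
  then have "card (Z - {y}) < card B" using Z fZ by (simp add: card_Diff_singleton) 
  ultimately have "Z - {y} \<noteq> B" by auto
  with \<open>Z - {y} \<subseteq> B\<close> obtain x where x: "x \<in> B" "x \<notin> Z - {y}" by blast
  then have x: "x \<in> B" "x \<notin> Z" using y by auto
  have sub: "Z \<subseteq> insert y (B - {x})" using Z(2) D x by blast
  have "card (insert y (B - {x})) = card B" 
  proof -
    have "card B > 0" using x fB by (auto simp: card_gt_0_iff)
    moreover have "card (insert y (B - {x})) = Suc (card (B - {x}))" using y fB by simp
    ultimately show ?thesis using x fB by (simp add: card_Diff_singleton)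
  qed
  then have ZZ: "Z = insert y (B - {x})" using card_subset_eq[OF _ sub] Z(4) fB by simp
  have "mbasis E I Z" using basis_of_card[OF m b Z(3,4)] .
  then have mb: "mbasis E I (insert y (B - {x}))" using ZZ by simp
  have "x \<in> B - D" using x Z(1) by blast
  then show ?thesis using mb by (rule bexI[rotated])
qed

lemma L3:
  assumes m: "matroid E I" and d: "I D" and DT: "D \<subseteq> T" and h: "\<forall>y\<in>T - D. \<not> I (insert y D)"
    and z: "I Z" and ZT: "Z \<subseteq> T"
  shows "card Z \<le> card D"
proof (rule ccontr)
  assume "\<not> ?thesis"
  then obtain y where "y \<in> Z - D" "I (insert y D)" using m_aug[OF m d z] by force
  then show False using h ZT by blast
qed

definition closedK :: "'a set \<Rightarrow> ('a set \<Rightarrow> bool) \<Rightarrow> 'a set \<Rightarrow> 'a set \<Rightarrow> bool" where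
  "closedK E I B K \<longleftrightarrow> (\<forall>x\<in>B. \<forall>y\<in>E - B. mbasis E I (insert y (B - {x})) \<longrightarrow> (x \<in> K \<longleftrightarrow> y \<in> K))"

lemma RB:
  assumes m: "matroid E I" and b: "mbasis E I B" and K: "closedK E I B K"
    and z: "I Z" and ZK: "Z \<subseteq> K"
  shows "card Z \<le> card (B \<inter> K)"
proof (rule L3[OF m _ _ _ z ZK])
  show "I (B \<inter> K)" using b m_mono[OF m] unfolding mbasis_def by blast
  show "B \<inter> K \<subseteq> K" by blast
  show "\<forall>y\<in>K - B \<inter> K. \<not> I (insert y (B \<inter> K))"
  proof (intro ballI notI)
    fix y assume y: "y \<in> K - B \<inter> K" and i: "I (insert y (B \<inter> K))"
    have yE: "y \<in> E" using m_sub[OF m i] by blast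
    then obtain x where "x \<in> B - B \<inter> K" "mbasis E I (insert y (B - {x}))"
      using L1[OF m b _ _ i] y by blast
    then show False using K y yE unfolding closedK_def by blast
  qed
qed

lemma closed_compl: "closedK E I B K \<Longrightarrow> B \<subseteq> E \<Longrightarrow> closedK E I B (E - K)"
  unfolding closedK_def by (metis Diff_iff subsetD)

lemma SL:
  assumes m: "matroid E I" and b: "mbasis E I B" and K: "closedK E I B K"
    and x: "I X" "X \<subseteq> K" and y: "I Y" "Y \<inter> K = {}"
  shows "I (X \<union> Y)"
proof -
  have bi: "I B" and bE: "B \<subseteq> E" using b unfolding mbasis_def by auto
  have fB: "finite B" using m_finX[OF m bi] .
  define BK where "BK = B \<inter> K"
  define BN where "BN = B - K"
  have cB: "card B = card BK + card BN" unfolding BK_def BN_def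
    using card_Int_Diff[OF fB] by simp
  have iBK: "I BK" "I BN" using m_mono[OF m bi] unfolding BK_def BN_def by auto
  have K2: "closedK E I B (E - K)" using closed_compl[OF K bE] .
  have BN2: "B \<inter> (E - K) = BN" using bE unfolding BN_def by blast
  have RK: "\<And>Z. I Z \<Longrightarrow> Z \<subseteq> K \<Longrightarrow> card Z \<le> card BK" using RB[OF m b K] unfolding BK_def by blast
  have RN: "\<And>Z. I Z \<Longrightarrow> Z \<inter> K = {} \<Longrightarrow> card Z \<le> card BN"
  proof -
    fix Z assume "I Z" "Z \<inter> K = {}"
    then have "Z \<subseteq> E - K" using m_sub[OF m] by blast
    then show "card Z \<le> card BN" using RB[OF m b K2 \<open>I Z\<close>] BN2 by simp
  qed
  obtain X' where X': "X \<subseteq> X'" "X' \<subseteq> X \<union> BK" "I X'" "card X' = card BK"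
    using m_ext[OF m x(1) iBK(1) RK[OF x]] by blast
  obtain Y' where Y': "Y \<subseteq> Y'" "Y' \<subseteq> Y \<union> BN" "I Y'" "card Y' = card BN"
    using m_ext[OF m y(1) iBK(2) RN[OF y]] by blast
  have X'K: "X' \<subseteq> K" using X' x unfolding BK_def by blast
  have Y'K: "Y' \<inter> K = {}" using Y' y unfolding BN_def by blast
  have fX': "finite X'" "finite Y'" using m_finX[OF m] X' Y' by auto
  obtain X'' where X'': "X' \<subseteq> X''" "X'' \<subseteq> X' \<union> B" "I X''" "card X'' = card B"
    using m_ext[OF m X'(3) bi] X'(4) cB by fastforce
  have fX'': "finite X''" using m_finX[OF m X''(3)] .
  have "card (X'' \<inter> K) \<le> card X'" using RK[of "X'' \<inter> K"] m_mono[OF m X''(3)] X'(4) by auto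
  moreover have "X' \<subseteq> X'' \<inter> K" using X'K X''(1) by blast
  moreover have "finite (X'' \<inter> K)" using fX'' by simp
  ultimately have e1: "X'' \<inter> K = X'" using card_seteq by blast
  have "card X'' = card (X'' \<inter> K) + card (X'' - K)" using card_Int_Diff[OF fX''] .
  then have cN: "card (X'' - K) = card BN" using e1 X'(4) X''(4) cB by simp
  have "X'' - K \<subseteq> BN" using X''(2) X'K unfolding BN_def by blast
  then have e2: "X'' - K = BN" using cN fB card_subset_eq[of BN "X'' - K"] unfolding BN_def by simp
  have "X'' = X' \<union> BN" using e1 e2 by blast
  then have iXB: "I (X' \<union> BN)" using X''(3) by simp
  have cXB: "card (X' \<union> BN) = card B" using \<open>X'' = X' \<union> BN\<close> X''(4) by simp
  obtain Y'' where Y'': "Y' \<subseteq> Y''" "Y'' \<subseteq> Y' \<union> (X' \<union> BN)" "I Y''" "card Y'' = card B"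
    using m_ext[OF m Y'(3) iXB] Y'(4) cB cXB by fastforce
  have fY'': "finite Y''" using m_finX[OF m Y''(3)] .
  have "card (Y'' - K) \<le> card Y'" using RN[of "Y'' - K"] m_mono[OF m Y''(3)] Y'(4) by auto
  moreover have "Y' \<subseteq> Y'' - K" using Y'K Y''(1) by blast
  moreover have "finite (Y'' - K)" using fY'' by simp
  ultimately have f1: "Y'' - K = Y'" using card_seteq by blast
  have "card Y'' = card (Y'' \<inter> K) + card (Y'' - K)" using card_Int_Diff[OF fY''] .
  then have cK: "card (Y'' \<inter> K) = card X'" using f1 Y'(4) Y''(4) X'(4) cB by simp
  have "Y'' \<inter> K \<subseteq> X'" using Y''(2) Y'K unfolding BN_def by blast
  then have f2: "Y'' \<inter> K = X'" using cK fX' card_subset_eq by blast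
  have "Y'' = X' \<union> Y'" using f1 f2 by blast
  then have "X \<union> Y \<subseteq> Y''" using X'(1) Y'(1) by blast
  then show ?thesis using m_mono[OF m Y''(3)] by simp
qed

lemma CL:
  assumes m: "matroid E I" and b: "mbasis E I B"
    and f: "\<forall>x\<in>B. \<forall>y\<in>E - B. mbasis E I (insert y (B - {x})) \<longrightarrow> f x = f y"
    and C: "mcircuit E I C" and a: "a \<in> C" and c: "c \<in> C"
  shows "f c = f a"
proof (rule ccontr)
  assume ne: "f c \<noteq> f a"
  define K where "K = {v. f v = f a}"
  have K: "closedK E I B K" using f unfolding closedK_def K_def by auto
  have "I (C - {c})" "I (C - {a})" using C a c unfolding mcircuit_def by auto
  moreover have "C \<inter> K \<subseteq> C - {c}" "C - K \<subseteq> C - {a}" using ne unfolding K_def by auto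
  ultimately have "I (C \<inter> K)" "I (C - K)" using m_mono[OF m] by auto
  then have "I ((C \<inter> K) \<union> (C - K))" using SL[OF m b K] by blast
  moreover have "(C \<inter> K) \<union> (C - K) = C" by blast
  ultimately show False using C unfolding mcircuit_def by simp
qed



lemma AC:
  assumes m: "matroid E I" and b: "mbasis E I B" and x: "x \<in> B" and y: "y \<in> E - B"
    and bb: "mbasis E I (insert y (B - {x}))"
  shows "\<exists>C. mcircuit E I C \<and> x \<in> C \<and> y \<in> C"
proof -
  have bi: "I B" and bE: "B \<subseteq> E" using b unfolding mbasis_def by auto
  define S where "S = insert y B"
  have fS: "finite S" unfolding S_def using m_finX[OF m bi] by simp
  have SE: "S \<subseteq> E" unfolding S_def using bE y by blast
  have nS: "\<not> I S" unfolding S_def using b y unfolding mbasis_def by simp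
  define P where "P n \<longleftrightarrow> (\<exists>C \<subseteq> S. \<not> I C \<and> card C = n)" for n
  have "P (card S)" unfolding P_def using nS by (intro exI[of _ S]) simp
  then have P0: "P (LEAST n. P n)" by (rule LeastI)
  have nP: "\<And>k. k < (LEAST n. P n) \<Longrightarrow> \<not> P k" by (rule not_less_Least)
  obtain C where C: "C \<subseteq> S" "\<not> I C" "card C = (LEAST n. P n)" using P0 unfolding P_def by blast
  have fC: "finite C" using finite_subset[OF C(1) fS] .
  have circ: "mcircuit E I C" unfolding mcircuit_def
  proof (intro conjI ballI)
    show "C \<subseteq> E" using C(1) SE by blast
    show "\<not> I C" by fact
    fix z assume z: "z \<in> C"
    have "card (C - {z}) < card C" using card_Diff1_less[OF fC z] .
    then have "\<not> P (card (C - {z}))" unfolding C(3) by (rule nP)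
    moreover have "C - {z} \<subseteq> S" using C(1) by blast
    ultimately show "I (C - {z})" unfolding P_def by blast
  qed
  have "y \<in> C"
  proof (rule ccontr)
    assume "y \<notin> C"
    then have "C \<subseteq> B" using C(1) unfolding S_def by blast
    then show False using m_mono[OF m bi] C(2) by blast
  qed
  moreover have "x \<in> C"
  proof (rule ccontr)
    assume "x \<notin> C"
    then have "C \<subseteq> insert y (B - {x})" using C(1) unfolding S_def by blast
    moreover have "I (insert y (B - {x}))" using bb unfolding mbasis_def by blast
    ultimately show False using m_mono[OF m] C(2) by blast
  qed
  ultimately show ?thesis using circ by blast
qed

lemma mrank_le:
  assumes e: "I {}" and h: "\<And>Z. Z \<subseteq> X \<Longrightarrow> I Z \<Longrightarrow> card Z \<le> k"
  shows "mrank I X \<le> k"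
proof -
  let ?S = "{card Y | Y. Y \<subseteq> X \<and> I Y}"
  have ne: "?S \<noteq> {}" using e by blast
  have "?S \<subseteq> {..k}" using h by auto
  then have fin: "finite ?S" using finite_subset by blast
  show ?thesis unfolding mrank_def using Max_le_iff[OF fin ne] h by auto
qed

lemma mrank_ge:
  assumes m: "matroid E I" and YX: "Y \<subseteq> X" and y: "I Y"
  shows "card Y \<le> mrank I X"
proof -
  let ?S = "{card Y | Y. Y \<subseteq> X \<and> I Y}"
  have "?S \<subseteq> {..card E}"
  proof
    fix n assume "n \<in> ?S"
    then obtain Y' where "n = card Y'" "I Y'" by blast
    then show "n \<in> {..card E}" using card_mono[OF m_fin[OF m] m_sub[OF m]] by simp
  qed
  then have fin: "finite ?S" using finite_subset by blast
  have "card Y \<in> ?S" using YX y by blast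
  then show ?thesis unfolding mrank_def using Max_ge[OF fin] by blast
qed

fun isw :: "('a \<times> 'a) set \<Rightarrow> 'a list \<Rightarrow> bool" where
  "isw A (x # y # ys) = ((x, y) \<in> A \<and> isw A (y # ys))"
| "isw A _ = True"

fun wl :: "('a \<times> 'a \<Rightarrow> 'g::ab_group_add) \<Rightarrow> 'a list \<Rightarrow> 'g" where
  "wl l (x # y # ys) = l (x, y) + wl l (y # ys)"
| "wl l _ = 0"

lemma isw_app: "isw A (xs @ y # ys) \<longleftrightarrow> isw A (xs @ [y]) \<and> isw A (y # ys)"
proof (induction xs)
  case Nil then show ?case by simp
next
  case (Cons a xs) then show ?case by (cases xs) auto
qed

lemma wl_app: "wl l (xs @ y # ys) = wl l (xs @ [y]) + wl l (y # ys)"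
proof (induction xs)
  case Nil then show ?case by simp
next
  case (Cons a xs) then show ?case by (cases xs) (auto simp: add.assoc)
qed

lemma isw_snoc: "xs \<noteq> [] \<Longrightarrow> isw A (xs @ [y]) \<longleftrightarrow> isw A xs \<and> (last xs, y) \<in> A"
proof (induction xs)
  case Nil then show ?case by simp
next
  case (Cons a xs) then show ?case by (cases xs) auto
qed

lemma wl_snoc: "xs \<noteq> [] \<Longrightarrow> wl l (xs @ [y]) = wl l xs + l (last xs, y)"
proof (induction xs)
  case Nil then show ?case by simp
next
  case (Cons a xs) then show ?case by (cases xs) (auto simp: add.assoc)
qed

lemma isw_nth: "isw A zs \<Longrightarrow> Suc i < length zs \<Longrightarrow> (zs ! i, zs ! Suc i) \<in> A"
proof (induction A zs arbitrary: i rule: isw.induct)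
  case (1 A x y ys)
  then show ?case by (cases i) auto
qed auto

lemma wl_sum: "wl l zs = (\<Sum>i < length zs - 1. l (zs ! i, zs ! Suc i))"
proof (induction l zs rule: wl.induct)
  case (1 l x y ys)
  have "(\<Sum>i < length (x # y # ys) - 1. l ((x # y # ys) ! i, (x # y # ys) ! Suc i))
    = l (x, y) + (\<Sum>i < length ys. l ((y # ys) ! i, (y # ys) ! Suc i))"
  proof -
    have e: "length (x # y # ys) - 1 = Suc (length ys)" by simp
    show ?thesis unfolding e sum.lessThan_Suc_shift by simp
  qed
  then show ?case using 1 by simp
qed auto

lemma nth_close: "ys \<noteq> [] \<Longrightarrow> i < length ys \<Longrightarrow> (ys @ [hd ys]) ! Suc i = ys ! (Suc i mod length ys)"
proof (cases "Suc i < length ys")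
  case True then show ?thesis by (simp add: nth_append)
next
  case False
  assume "ys \<noteq> []" "i < length ys"
  then have "Suc i = length ys" using False by simp
  then show ?thesis using \<open>ys \<noteq> []\<close> by (simp add: nth_append hd_conv_nth)
qed

lemma CW:
  assumes cyc: "\<forall>vs. dir_cycle A vs \<longrightarrow> cycle_label B \<psi> vs = 0"
  shows "xs \<noteq> [] \<Longrightarrow> hd xs = last xs \<Longrightarrow> isw A xs \<Longrightarrow> wl (arc_label B \<psi>) xs = 0"
proof (induction "length xs" arbitrary: xs rule: less_induct)
  case less
  show ?case
  proof (cases "length xs = 1")
    case True
    then obtain v where "xs = [v]" by (cases xs) auto
    then show ?thesis by simp
  next
    case False
    define ys where "ys = butlast xs"
    have ysne: "ys \<noteq> []" using False less(2) unfolding ys_def by (cases xs) auto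
    have xs0: "xs = ys @ [last xs]" using less(2) unfolding ys_def by simp
    have "hd xs = hd ys" using ysne by (subst xs0) simp
    then have xs: "xs = ys @ [hd ys]" using xs0 less(3) by simp
    have lxs: "length xs = Suc (length ys)" by (subst xs) simp
    show ?thesis
    proof (cases "distinct ys")
      case True
      have "dir_cycle A ys" unfolding dir_cycle_def
      proof (intro conjI allI impI)
        show "ys \<noteq> []" "distinct ys" by fact+
        fix i assume i: "i < length ys"
        have "(xs ! i, xs ! Suc i) \<in> A" using isw_nth[OF less(4), of i] i lxs by simp
        moreover have "xs ! i = ys ! i" using i by (subst xs) (simp add: nth_append)
        moreover have "xs ! Suc i = ys ! ((i + 1) mod length ys)" using nth_close[OF ysne i] xs by simp
        ultimately show "(ys ! i, ys ! ((i + 1) mod length ys)) \<in> A" by simp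
      qed
      then have "cycle_label B \<psi> ys = 0" using cyc by blast
      moreover have "cycle_label B \<psi> ys = wl (arc_label B \<psi>) xs"
        unfolding cycle_label_def wl_sum
      proof -
        have eq: "length xs - 1 = length ys" using xs by simp
        have h: "\<And>i. i < length ys \<Longrightarrow> arc_label B \<psi> (ys ! i, ys ! ((i + 1) mod length ys))
            = arc_label B \<psi> (xs ! i, xs ! Suc i)"
        proof -
          fix i assume i: "i < length ys"
          have "xs ! i = ys ! i" using i by (subst xs) (simp add: nth_append)
          moreover have "xs ! Suc i = ys ! ((i + 1) mod length ys)" using nth_close[OF ysne i] xs by simp
          ultimately show "arc_label B \<psi> (ys ! i, ys ! ((i + 1) mod length ys))
            = arc_label B \<psi> (xs ! i, xs ! Suc i)" by simp
        qed
        show "(\<Sum>i<length ys. arc_label B \<psi> (ys ! i, ys ! ((i + 1) mod length ys))) =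
          (\<Sum>i<length xs - 1. arc_label B \<psi> (xs ! i, xs ! Suc i))" unfolding eq
          by (rule sum.cong[OF refl]) (rule h, simp)
      qed
      ultimately show ?thesis by simp
    next
      case False
      then obtain a v b c where ys: "ys = a @ [v] @ b @ [v] @ c" using not_distinct_decomp by blast
      define l where "l = hd ys"
      have xs2: "xs = a @ v # (b @ v # (c @ [l]))" using xs ys unfolding l_def by simp
      define W1 where "W1 = (v # b) @ [v]"
      define W2 where "W2 = a @ v # (c @ [l])"
      have sp: "v # (b @ v # (c @ [l])) = (v # b) @ v # (c @ [l])" by simp
      have lab: "wl (arc_label B \<psi>) xs = wl (arc_label B \<psi>) W1 + wl (arc_label B \<psi>) W2"
      proof -
        have e1: "wl (arc_label B \<psi>) xs = wl (arc_label B \<psi>) (a @ [v]) + wl (arc_label B \<psi>) (v # (b @ v # (c @ [l])))"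
          by (subst xs2) (rule wl_app)
        have e2: "wl (arc_label B \<psi>) (v # (b @ v # (c @ [l]))) = wl (arc_label B \<psi>) W1 + wl (arc_label B \<psi>) (v # (c @ [l]))"
          unfolding sp W1_def by (rule wl_app)
        have e3: "wl (arc_label B \<psi>) W2 = wl (arc_label B \<psi>) (a @ [v]) + wl (arc_label B \<psi>) (v # (c @ [l]))"
          unfolding W2_def by (rule wl_app)
        show ?thesis unfolding e1 e2 e3 by (simp add: algebra_simps)
      qed
      have iw: "isw A W1 \<and> isw A W2"
      proof -
        have isx: "isw A (a @ v # (b @ v # (c @ [l])))" using less(4) by (simp only: xs2)
        have "isw A (a @ [v]) \<and> isw A (v # (b @ v # (c @ [l])))" using iffD1[OF isw_app[of A a v "b @ v # (c @ [l])"] isx] .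
        moreover have "isw A (v # (b @ v # (c @ [l]))) \<longleftrightarrow> isw A W1 \<and> isw A (v # (c @ [l]))"
          unfolding sp W1_def by (rule isw_app)
        moreover have "isw A W2 \<longleftrightarrow> isw A (a @ [v]) \<and> isw A (v # (c @ [l]))"
          unfolding W2_def by (rule isw_app)
        ultimately show ?thesis by blast
      qed
      have h1: "hd xs = hd (a @ v # (b @ v # (c @ [l])))" by (simp only: xs2)
      have hd2: "hd W2 = hd xs" unfolding W2_def h1 by (simp add: hd_append)
      have l1: "last xs = last (a @ v # (b @ v # (c @ [l])))" by (simp only: xs2)
      have last2: "last W2 = last xs" unfolding W2_def l1 by simp
      have lx0: "length xs = length (a @ v # (b @ v # (c @ [l])))" by (simp only: xs2)
      have lx: "length xs = length a + length b + length c + 3" unfolding lx0 by simp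
      have "length W1 < length xs" using lx unfolding W1_def by simp
      moreover have "W1 \<noteq> []" "hd W1 = last W1" unfolding W1_def by simp_all
      ultimately have z1: "wl (arc_label B \<psi>) W1 = 0" using less(1) iw by blast
      have "length W2 < length xs" using lx unfolding W2_def by simp
      moreover have "W2 \<noteq> []" unfolding W2_def by simp
      moreover have "hd W2 = last W2" using hd2 last2 less(3) by simp
      ultimately have "wl (arc_label B \<psi>) W2 = 0" using less(1) iw by blast
      then show ?thesis using lab z1 by simp
    qed
  qed
qed



lemma walk_ex:
  assumes "(u, v) \<in> A\<^sup>*"
  shows "\<exists>ws. ws \<noteq> [] \<and> hd ws = u \<and> last ws = v \<and> isw A ws"
  using assms
proof (induction rule: rtrancl_induct)
  case base
  then show ?case by (intro exI[of _ "[u]"]) simp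
next
  case (step y z)
  then obtain ws where ws: "ws \<noteq> []" "hd ws = u" "last ws = y" "isw A ws" by blast
  have "isw A (ws @ [z])" using isw_snoc[OF ws(1)] ws step(2) by simp
  moreover have "hd (ws @ [z]) = u" using ws by simp
  ultimately show ?case by (intro exI[of _ "ws @ [z]"]) simp
qed

lemma potential:
  fixes lab :: "'a \<times> 'a \<Rightarrow> 'g::ab_group_add"
  assumes cw: "\<And>xs. xs \<noteq> [] \<Longrightarrow> hd xs = last xs \<Longrightarrow> isw A xs \<Longrightarrow> wl lab xs = 0"
    and sc: "\<And>u v. u \<in> E \<Longrightarrow> v \<in> E \<Longrightarrow> (u, v) \<in> A\<^sup>*"
    and AE: "A \<subseteq> E \<times> E" and v0: "v0 \<in> E"
  shows "\<exists>p. \<forall>u v. (u, v) \<in> A \<longrightarrow> lab (u, v) = p v - p u"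
proof -
  define P where "P v = (SOME ws. ws \<noteq> [] \<and> hd ws = v0 \<and> last ws = v \<and> isw A ws)" for v
  have PP: "P v \<noteq> [] \<and> hd (P v) = v0 \<and> last (P v) = v \<and> isw A (P v)" if "v \<in> E" for v
    unfolding P_def by (rule someI_ex) (rule walk_ex[OF sc[OF v0 that]])
  have main: "lab (u, v) = wl lab (P v) - wl lab (P u)" if uv: "(u, v) \<in> A" for u v
  proof -
    have uE: "u \<in> E" and vE: "v \<in> E" using uv AE by auto
    obtain Q where Q: "Q \<noteq> []" "hd Q = v" "last Q = v0" "isw A Q" using walk_ex[OF sc[OF vE v0]] by blast
    have Qe: "Q = v # tl Q" using Q by (cases Q) auto
    note Pu = PP[OF uE] and Pv = PP[OF vE]
    define W1 where "W1 = P u @ v # tl Q"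
    have "isw A (P u @ [v])" using isw_snoc[of "P u" A v] Pu uv by simp
    then have i1: "isw A W1" unfolding W1_def using isw_app[of A "P u" v "tl Q"] Q(4) Qe by simp
    have w1: "wl lab W1 = wl lab (P u) + lab (u, v) + wl lab Q"
      unfolding W1_def wl_app[of lab "P u" v "tl Q"] wl_snoc[of "P u" lab v, OF conjunct1[OF Pu]]
      using Pu Qe by simp
    have "wl lab W1 = 0" using cw[of W1] i1 Pu Q unfolding W1_def
      by (metis Nil_is_append_conv hd_append2 last_ConsR last_appendR list.distinct(1) Qe last.simps)
    define Pb where "Pb = butlast (P v)"
    have Pve: "P v = Pb @ [v]" unfolding Pb_def using Pv by (metis append_butlast_last_id)
    define W2 where "W2 = Pb @ v # tl Q"
    have i2: "isw A W2" unfolding W2_def using isw_app[of A Pb v "tl Q"] Q(4) Qe Pv Pve by simp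
    have w2: "wl lab W2 = wl lab (P v) + wl lab Q"
      unfolding W2_def wl_app[of lab Pb v "tl Q"] using Pve Qe by simp
    have hW2: "hd W2 = v0"
    proof -
      have "hd (P v) = v0" using Pv by simp
      then show ?thesis unfolding W2_def using Pve by (cases Pb) auto
    qed
    have lW2: "last W2 = v0" unfolding W2_def using Q Qe by (metis last_appendR list.distinct(1))
    have "wl lab W2 = 0" using cw[of W2] i2 hW2 lW2 unfolding W2_def by simp
    show ?thesis using w1 w2 \<open>wl lab W1 = 0\<close> \<open>wl lab W2 = 0\<close>
      by (simp add: algebra_simps eq_neg_iff_add_eq_0[symmetric])
  qed
  show ?thesis by (rule exI[of _ "\<lambda>v. wl lab (P v)"]) (use main in blast)
qed



lemma arcI1: "x \<in> B \<Longrightarrow> y \<in> E - B \<Longrightarrow> mbasis E I1 (insert y (B - {x})) \<Longrightarrow> (x, y) \<in> exch_arcs E I1 I2 B"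
  unfolding exch_arcs_def by blast
lemma arcI2: "x \<in> B \<Longrightarrow> y \<in> E - B \<Longrightarrow> mbasis E I2 (insert y (B - {x})) \<Longrightarrow> (y, x) \<in> exch_arcs E I1 I2 B"
  unfolding exch_arcs_def by blast
lemma arcE: "(a, b) \<in> exch_arcs E I1 I2 B \<Longrightarrow>
  (a \<in> B \<and> b \<in> E - B \<and> mbasis E I1 (insert b (B - {a}))) \<or> (b \<in> B \<and> a \<in> E - B \<and> mbasis E I2 (insert a (B - {b})))"
  unfolding exch_arcs_def by blast

lemma arcs_sub: "B \<subseteq> E \<Longrightarrow> exch_arcs E I1 I2 B \<subseteq> E \<times> E"
  unfolding exch_arcs_def by blast

lemma SC:
  assumes m1: "matroid E I1" and m2: "matroid E I2" and r1: "mrank I1 E = r"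
    and conn: "\<And>X. X \<noteq> {} \<Longrightarrow> X \<subset> E \<Longrightarrow> mrank I1 X + mrank I2 (E - X) > r"
    and b1: "mbasis E I1 B" and b2: "mbasis E I2 B" and u: "u \<in> E" and v: "v \<in> E"
  shows "(u, v) \<in> (exch_arcs E I1 I2 B)\<^sup>*"
proof (rule ccontr)
  assume nv: "(u, v) \<notin> (exch_arcs E I1 I2 B)\<^sup>*"
  let ?A = "exch_arcs E I1 I2 B"
  define S where "S = {w. (u, w) \<in> ?A\<^sup>*}"
  have bi: "I1 B" "I2 B" and bE: "B \<subseteq> E" using b1 b2 unfolding mbasis_def by auto
  have fB: "finite B" using m_finX[OF m1 bi(1)] .
  have AE: "?A \<subseteq> E \<times> E" using arcs_sub[OF bE] .
  have SE: "S \<subseteq> E"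
  proof
    fix w assume "w \<in> S"
    then have "(u, w) \<in> ?A\<^sup>*" unfolding S_def by simp
    then show "w \<in> E"
    proof (cases rule: rtranclE)
      case base then show ?thesis using u by simp
    next
      case (step y) then show ?thesis using AE by blast
    qed
  qed
  have uS: "u \<in> S" unfolding S_def by simp
  have vS: "v \<notin> S" unfolding S_def using nv by simp
  have cS: "\<And>a b. a \<in> S \<Longrightarrow> (a, b) \<in> ?A \<Longrightarrow> b \<in> S" unfolding S_def
    by (simp add: rtrancl_into_rtrancl)
  define X where "X = E - S"
  have "X \<noteq> {}" using v vS unfolding X_def by blast
  moreover have "X \<subset> E" using uS u unfolding X_def by blast
  ultimately have gt: "mrank I1 X + mrank I2 (E - X) > r" by (rule conn)
  have EX: "E - X = S" using SE unfolding X_def by blast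
  have le1: "mrank I1 X \<le> card (B - S)"
  proof (rule mrank_le[where I=I1, OF m_empty[OF m1]])
    fix Z assume "Z \<subseteq> X" "I1 Z"
    show "card Z \<le> card (B - S)"
    proof (rule L3[OF m1 _ _ _ \<open>I1 Z\<close> \<open>Z \<subseteq> X\<close>])
      show "I1 (B - S)" using m_mono[OF m1 bi(1)] by blast
      show "B - S \<subseteq> X" using bE unfolding X_def by blast
      show "\<forall>y\<in>X - (B - S). \<not> I1 (insert y (B - S))"
      proof (intro ballI notI)
        fix y assume y: "y \<in> X - (B - S)" and i: "I1 (insert y (B - S))"
        have yEB: "y \<in> E - B" using y unfolding X_def by blast
        obtain x where x: "x \<in> B - (B - S)" "mbasis E I1 (insert y (B - {x}))"
          using L1[OF m1 b1 yEB _ i] by blast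
        have "(x, y) \<in> ?A" by (rule arcI1) (use x yEB in auto)
        then have "y \<in> S" using cS x by blast
        then show False using y unfolding X_def by blast
      qed
    qed
  qed
  have le2: "mrank I2 S \<le> card (B \<inter> S)"
  proof (rule mrank_le[where I=I2, OF m_empty[OF m2]])
    fix Z assume "Z \<subseteq> S" "I2 Z"
    show "card Z \<le> card (B \<inter> S)"
    proof (rule L3[OF m2 _ _ _ \<open>I2 Z\<close> \<open>Z \<subseteq> S\<close>])
      show "I2 (B \<inter> S)" using m_mono[OF m2 bi(2)] by blast
      show "B \<inter> S \<subseteq> S" by blast
      show "\<forall>y\<in>S - (B \<inter> S). \<not> I2 (insert y (B \<inter> S))"
      proof (intro ballI notI)
        fix y assume y: "y \<in> S - (B \<inter> S)" and i: "I2 (insert y (B \<inter> S))"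
        have yEB: "y \<in> E - B" using y SE by blast
        obtain x where x: "x \<in> B - (B \<inter> S)" "mbasis E I2 (insert y (B - {x}))"
          using L1[OF m2 b2 yEB _ i] by blast
        have "(y, x) \<in> ?A" by (rule arcI2) (use x yEB in auto)
        then have "x \<in> S" using cS y by blast
        then show False using x by blast
      qed
    qed
  qed
  have "card B = card (B \<inter> S) + card (B - S)" using card_Int_Diff[OF fB] .
  moreover have "card B \<le> r" using mrank_ge[OF m1 bE bi(1)] r1 by simp
  ultimately show False using gt le1 le2 EX by simp
qed

lemma COMP:
  assumes f: "\<And>C a c. mcircuit E I C \<Longrightarrow> a \<in> C \<Longrightarrow> c \<in> C \<Longrightarrow> f c = f a"
    and K: "K \<in> mcomponents E I" and x: "x \<in> K" and y: "y \<in> K"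
  shows "f x = f y"
proof -
  obtain z where K: "K = {y \<in> E. comp_rel E I z y}" using K unfolding mcomponents_def by blast
  have "\<And>w. w \<in> K \<Longrightarrow> f w = f z"
  proof -
    fix w assume "w \<in> K"
    then have "comp_rel E I z w" using K by blast
    then show "f w = f z" unfolding comp_rel_def using f by blast
  qed
  then show ?thesis using x y by simp
qed

lemma compmem:
  assumes C: "mcircuit E I C" "x \<in> C" "y \<in> C"
  shows "{z \<in> E. comp_rel E I x z} \<in> mcomponents E I" "x \<in> {z \<in> E. comp_rel E I x z}"
    "y \<in> {z \<in> E. comp_rel E I x z}"
proof -
  have "C \<subseteq> E" using C unfolding mcircuit_def by blast
  then show "{z \<in> E. comp_rel E I x z} \<in> mcomponents E I" "x \<in> {z \<in> E. comp_rel E I x z}"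
    "y \<in> {z \<in> E. comp_rel E I x z}" using C unfolding mcomponents_def comp_rel_def by blast+
qed

lemma tele: "n > 0 \<Longrightarrow> (\<Sum>i<n. f (Suc i mod n)) = (\<Sum>i<n. (f i :: 'g::ab_group_add))"
proof (cases n)
  case (Suc m)
  have "(\<Sum>i<Suc m. f (Suc i mod Suc m)) = (\<Sum>i<m. f (Suc i mod Suc m)) + f (Suc m mod Suc m)"
    by (rule sum.lessThan_Suc)
  also have "(\<Sum>i<m. f (Suc i mod Suc m)) = (\<Sum>i<m. f (Suc i))" by (rule sum.cong) auto
  also have "(\<Sum>i<Suc m. f i) = f 0 + (\<Sum>i<m. f (Suc i))" by (rule sum.lessThan_Suc_shift)
  ultimately show ?thesis using Suc by (simp add: add.commute)
qed simp



theorem theorem3p13: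
  fixes E :: "'a set" and I1 I2 :: "'a set \<Rightarrow> bool" and r :: nat
    and B :: "'a set" and \<psi> :: "'a \<Rightarrow> 'g::ab_group_add"
  assumes "matroid E I1" and "matroid E I2"
    and "mrank I1 E = r" and "mrank I2 E = r"
    and "\<And>X. X \<noteq> {} \<Longrightarrow> X \<subset> E \<Longrightarrow> mrank I1 X + mrank I2 (E - X) > r"
    and "mbasis E I1 B" and "mbasis E I2 B"
  shows "(\<forall>vs. dir_cycle (exch_arcs E I1 I2 B) vs \<longrightarrow> cycle_label B \<psi> vs = 0) \<longleftrightarrow>
    (\<exists>\<psi>1 \<psi>2 :: 'a \<Rightarrow> 'g. (\<forall>x\<in>E. \<psi> x = \<psi>1 x + \<psi>2 x) \<and>
       (\<forall>K\<in>mcomponents E I1. \<forall>x\<in>K. \<forall>y\<in>K. \<psi>1 x = \<psi>1 y) \<and>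
       (\<forall>K\<in>mcomponents E I2. \<forall>x\<in>K. \<forall>y\<in>K. \<psi>2 x = \<psi>2 y))"
proof -
  note m1 = assms(1) and m2 = assms(2) and b1 = assms(6) and b2 = assms(7)
  let ?A = "exch_arcs E I1 I2 B"
  have bE: "B \<subseteq> E" using b1 unfolding mbasis_def by auto
  have AE: "?A \<subseteq> E \<times> E" using arcs_sub[OF bE] .
  show ?thesis
  proof
    assume cyc: "\<forall>vs. dir_cycle ?A vs \<longrightarrow> cycle_label B \<psi> vs = 0"
    show "\<exists>\<psi>1 \<psi>2 :: 'a \<Rightarrow> 'g. (\<forall>x\<in>E. \<psi> x = \<psi>1 x + \<psi>2 x) \<and>
       (\<forall>K\<in>mcomponents E I1. \<forall>x\<in>K. \<forall>y\<in>K. \<psi>1 x = \<psi>1 y) \<and>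
       (\<forall>K\<in>mcomponents E I2. \<forall>x\<in>K. \<forall>y\<in>K. \<psi>2 x = \<psi>2 y)"
    proof (cases "E = {}")
      case True
      then have "mcomponents E I1 = {}" "mcomponents E I2 = {}" unfolding mcomponents_def by auto
      then show ?thesis by (intro exI[of _ \<psi>] exI[of _ "\<lambda>_. 0"]) simp
    next
      case False
      then obtain v0 where v0: "v0 \<in> E" by blast
      obtain p where p: "\<And>u v. (u, v) \<in> ?A \<Longrightarrow> arc_label B \<psi> (u, v) = p v - p u"
        using potential[OF CW[OF cyc] SC[OF m1 m2 assms(3) assms(5) b1 b2] AE v0] by blast
      define \<psi>2 where "\<psi>2 v = p v + (if v \<in> B then \<psi> v else 0)" for v
      define \<psi>1 where "\<psi>1 v = \<psi> v - \<psi>2 v" for v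
      have f1: "\<psi>1 c = \<psi>1 a" if "mcircuit E I1 C" "a \<in> C" "c \<in> C" for C a c
      proof (rule CL[OF m1 b1 _ that])
        show "\<forall>x\<in>B. \<forall>y\<in>E - B. mbasis E I1 (insert y (B - {x})) \<longrightarrow> \<psi>1 x = \<psi>1 y"
        proof (intro ballI impI)
          fix x y assume x: "x \<in> B" and y: "y \<in> E - B" and bb: "mbasis E I1 (insert y (B - {x}))"
          have "(x, y) \<in> ?A" using arcI1[OF x y bb] .
          then have "\<psi> y = p y - p x" using p[of x y] x unfolding arc_label_def by simp
          then show "\<psi>1 x = \<psi>1 y" unfolding \<psi>1_def \<psi>2_def using x y by (simp add: algebra_simps)
        qed
      qed
      have f2: "\<psi>2 c = \<psi>2 a" if "mcircuit E I2 C" "a \<in> C" "c \<in> C" for C a c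
      proof (rule CL[OF m2 b2 _ that])
        show "\<forall>x\<in>B. \<forall>y\<in>E - B. mbasis E I2 (insert y (B - {x})) \<longrightarrow> \<psi>2 x = \<psi>2 y"
        proof (intro ballI impI)
          fix x y assume x: "x \<in> B" and y: "y \<in> E - B" and bb: "mbasis E I2 (insert y (B - {x}))"
          have "(y, x) \<in> ?A" using arcI2[OF x y bb] .
          then have "- \<psi> x = p x - p y" using p[of y x] y unfolding arc_label_def by simp
          then show "\<psi>2 x = \<psi>2 y" unfolding \<psi>2_def using x y
            by (simp add: algebra_simps)
        qed
      qed
      have s1: "\<forall>x\<in>E. \<psi> x = \<psi>1 x + \<psi>2 x" unfolding \<psi>1_def by simp
      have s2: "\<forall>K\<in>mcomponents E I1. \<forall>x\<in>K. \<forall>y\<in>K. \<psi>1 x = \<psi>1 y"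
        by (intro ballI) (rule COMP[where f=\<psi>1, OF f1])
      have s3: "\<forall>K\<in>mcomponents E I2. \<forall>x\<in>K. \<forall>y\<in>K. \<psi>2 x = \<psi>2 y"
        by (intro ballI) (rule COMP[where f=\<psi>2, OF f2])
      show ?thesis by (rule exI[of _ \<psi>1], rule exI[of _ \<psi>2]) (intro conjI s1 s2 s3)
    qed
  next
    assume "\<exists>\<psi>1 \<psi>2 :: 'a \<Rightarrow> 'g. (\<forall>x\<in>E. \<psi> x = \<psi>1 x + \<psi>2 x) \<and>
       (\<forall>K\<in>mcomponents E I1. \<forall>x\<in>K. \<forall>y\<in>K. \<psi>1 x = \<psi>1 y) \<and>
       (\<forall>K\<in>mcomponents E I2. \<forall>x\<in>K. \<forall>y\<in>K. \<psi>2 x = \<psi>2 y)"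
    then obtain \<psi>1 \<psi>2 :: "'a \<Rightarrow> 'g" where sum: "\<forall>x\<in>E. \<psi> x = \<psi>1 x + \<psi>2 x"
      and c1: "\<forall>K\<in>mcomponents E I1. \<forall>x\<in>K. \<forall>y\<in>K. \<psi>1 x = \<psi>1 y"
      and c2: "\<forall>K\<in>mcomponents E I2. \<forall>x\<in>K. \<forall>y\<in>K. \<psi>2 x = \<psi>2 y" by (elim exE conjE) blast
    define h where "h v = (if v \<in> B then - \<psi>1 v else \<psi>2 v)" for v
    have arc: "arc_label B \<psi> (a, b) = h b - h a" if ab: "(a, b) \<in> ?A" for a b
    proof -
      from arcE[OF ab] show ?thesis
      proof
        assume H: "a \<in> B \<and> b \<in> E - B \<and> mbasis E I1 (insert b (B - {a}))"
        then obtain C where C: "mcircuit E I1 C" "a \<in> C" "b \<in> C" using AC[OF m1 b1] by blast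
        have "\<psi>1 a = \<psi>1 b" by (rule c1[rule_format, OF compmem(1)[OF C] compmem(2)[OF C] compmem(3)[OF C]])
        moreover have "\<psi> b = \<psi>1 b + \<psi>2 b" using sum H by blast
        ultimately show ?thesis using H unfolding arc_label_def h_def by (simp add: algebra_simps)
      next
        assume H: "b \<in> B \<and> a \<in> E - B \<and> mbasis E I2 (insert a (B - {b}))"
        then obtain C where C: "mcircuit E I2 C" "b \<in> C" "a \<in> C" using AC[OF m2 b2] by blast
        have "\<psi>2 b = \<psi>2 a" by (rule c2[rule_format, OF compmem(1)[OF C] compmem(2)[OF C] compmem(3)[OF C]])
        moreover have "\<psi> b = \<psi>1 b + \<psi>2 b" using sum H bE by blast
        ultimately show ?thesis using H unfolding arc_label_def h_def by (simp add: algebra_simps)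
      qed
    qed
    show "\<forall>vs. dir_cycle ?A vs \<longrightarrow> cycle_label B \<psi> vs = 0"
    proof (intro allI impI)
      fix vs assume dc: "dir_cycle ?A vs"
      let ?n = "length vs"
      have n: "?n > 0" using dc unfolding dir_cycle_def by simp
      have "cycle_label B \<psi> vs = (\<Sum>i<?n. h (vs ! (Suc i mod ?n)) - h (vs ! i))"
        unfolding cycle_label_def
      proof (rule sum.cong[OF refl])
        fix i assume "i \<in> {..<?n}"
        then have "(vs ! i, vs ! ((i + 1) mod ?n)) \<in> ?A" using dc unfolding dir_cycle_def by simp
        then show "arc_label B \<psi> (vs ! i, vs ! ((i + 1) mod ?n)) = h (vs ! (Suc i mod ?n)) - h (vs ! i)"
          using arc by simp
      qed
      also have "\<dots> = (\<Sum>i<?n. h (vs ! (Suc i mod ?n))) - (\<Sum>i<?n. h (vs ! i))"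
        by (rule sum_subtractf)
      also have "\<dots> = 0" using tele[OF n, of "\<lambda>i. h (vs ! i)"] by simp
      finally show "cycle_label B \<psi> vs = 0" .
    qed
  qed
qed


end
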